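(* Let $k=\overline{\mathbb Q}$ with the trivial valuation and let $G=\operatorname{Spec}k[T]$ be the additive group (Hopf algebra coproduct $\Delta(T)=T\otimes1+1\otimes T$), with $G^{\mathrm{an}}=\operatorname{Hom}_k(k[T],\mathbb T)$ and Berkovich's hyperoperation $\odot$. For $t\in[-\infty,0)$ let $f_t\in\operatorname{Hom}_k(k[T],\mathbb T)$ be the point given by $f_t(g)=r\cdot t$ for $g\ne0$, where $r\ge0$ is the largest integer with $T^r\mid g$ (with the convention $0\cdot(-\infty)=0$), and $f_t(0)=-\infty$. Then for $x,y\in(-\infty,0)$, every $h\in f_x\odot f_y$ satisfies $\{g: h(g)<0\}=(T)$, and $$f_x\odot f_y=\begin{cases}\{f_{\max\{x,y\}}\}&\text{if }x\ne y,\\ \{f_t: t\in[-\infty,x]\}&\text{if }x=y.\end{cases}$$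
   Context: $\mathbb T=\mathbb R\cup\{-\infty\}$ is the tropical hyperfield: multiplication is usual addition with $-\infty$ absorbing, hyperaddition $s\oplus t=\max\{s,t\}$ if $s\ne t$, $s\oplus s=\{u\in\mathbb T:u\le s\}$. The trivial valuation on $k$ sends nonzero elements to $0$ and $0$ to $-\infty$. $\operatorname{Hom}_k(B,\mathbb T)$ is the set of maps $\varphi:B\to\mathbb T$ with $\varphi(0)=-\infty$, $\varphi(1)=0$, $\varphi(xy)=\varphi(x)+\varphi(y)$, $\varphi(x+y)\in\varphi(x)\oplus\varphi(y)$, restricting to the trivial valuation on $k$. With $A=k[T]$, $j_1(a)=a\otimes1$, $j_2(a)=1\otimes a$, Berkovich's hyperoperation is $g\odot h=\{f\in\operatorname{Hom}_k(A,\mathbb T):\exists\beta\in\operatorname{Hom}_k(A\otimes_kA,\mathbb T)\text{ with }\beta\circ j_1=g,\ \beta\circ j_2=h,\ f=\beta\circ\Delta\}$. *)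

theory Defs
  imports "HOL-Computational_Algebra.Polynomial" "HOL-Library.Extended_Real"
begin

text \<open>The field k = algebraic closure of Q, realised as the algebraic complex numbers.
  k[T] is the set of complex polynomials with algebraic coefficients;
  k[T] tensor k[T] = k[X,Y] is the set of bivariate complex polynomials
  (type complex poly poly: inner variable X = first tensor factor,
  outer variable Y = second tensor factor) with algebraic coefficients.\<close>

definition kQbar :: "complex set" where
  "kQbar = {a. algebraic a}"

definition kT :: "complex poly set" where
  "kT = {p. \<forall>i. coeff p i \<in> kQbar}"

definition kTT :: "complex poly poly set" where
  "kTT = {p. \<forall>i j. coeff (coeff p i) j \<in> kQbar}"

text \<open>Tropical hyperfield T = R \<union> {-\<infinity>}, realised inside ereal (values \<noteq> \<infinity>).
  Tropical multiplication is ereal addition; hyperaddition below.\<close>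

definition trop_hyperadd :: "ereal \<Rightarrow> ereal \<Rightarrow> ereal set" where
  "trop_hyperadd s t = (if s \<noteq> t then {max s t} else {u. u \<le> s})"

text \<open>Hom_k(B,T) for a k-algebra B given as a carrier set S inside a ring,
  with structure map c : k \<rightarrow> B. Maps are extensional (undefined off S).\<close>

definition trop_hom :: "'b::comm_ring_1 set \<Rightarrow> (complex \<Rightarrow> 'b) \<Rightarrow> ('b \<Rightarrow> ereal) \<Rightarrow> bool" where
  "trop_hom S c \<phi> \<longleftrightarrow>
     (\<forall>x\<in>S. \<phi> x \<noteq> \<infinity>) \<and>
     \<phi> 0 = -\<infinity> \<and> \<phi> 1 = 0 \<and>
     (\<forall>x\<in>S. \<forall>y\<in>S. \<phi> (x * y) = \<phi> x + \<phi> y) \<and>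
     (\<forall>x\<in>S. \<forall>y\<in>S. \<phi> (x + y) \<in> trop_hyperadd (\<phi> x) (\<phi> y)) \<and>
     (\<forall>a\<in>kQbar. \<phi> (c a) = (if a = 0 then -\<infinity> else 0)) \<and>
     (\<forall>x. x \<notin> S \<longrightarrow> \<phi> x = undefined)"

definition HomA :: "(complex poly \<Rightarrow> ereal) set" where
  "HomA = {\<phi>. trop_hom kT (\<lambda>a. [:a:]) \<phi>}"

definition HomB :: "(complex poly poly \<Rightarrow> ereal) set" where
  "HomB = {\<phi>. trop_hom kTT (\<lambda>a. [:[:a:]:]) \<phi>}"

text \<open>j1(a) = a \<otimes> 1 = a(X),  j2(a) = 1 \<otimes> a = a(Y).\<close>

definition j1 :: "complex poly \<Rightarrow> complex poly poly" where
  "j1 a = [:a:]"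

definition j2 :: "complex poly \<Rightarrow> complex poly poly" where
  "j2 a = map_poly (\<lambda>c. [:c:]) a"

text \<open>Coproduct of the additive group: \<Delta>(T) = T\<otimes>1 + 1\<otimes>T, i.e. \<Delta>(g) = g(X + Y).\<close>

definition Delta :: "complex poly \<Rightarrow> complex poly poly" where
  "Delta g = poly (map_poly (\<lambda>c. [:[:c:]:]) g) [:[:0, 1:], 1:]"

definition berk_odot :: "(complex poly \<Rightarrow> ereal) \<Rightarrow> (complex poly \<Rightarrow> ereal) \<Rightarrow> (complex poly \<Rightarrow> ereal) set" where
  "berk_odot g h = {f. f \<in> HomA \<and> (\<exists>\<beta>\<in>HomB.
      (\<forall>a\<in>kT. \<beta> (j1 a) = g a) \<and> (\<forall>a\<in>kT. \<beta> (j2 a) = h a) \<and>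
      (\<forall>a\<in>kT. f a = \<beta> (Delta a)))}"

text \<open>The points f_t: f_t(g) = r * t with r = largest r with T^r | g
  (ereal has 0 * (-\<infinity>) = 0), f_t(0) = -\<infinity>.\<close>

definition f_pt :: "ereal \<Rightarrow> complex poly \<Rightarrow> ereal" where
  "f_pt t g = (if g \<in> kT then (if g = 0 then -\<infinity>
      else ereal (real (GREATEST r. [:0, 1:] ^ r dvd g)) * t) else undefined)"

end

theory Submission
  imports Defs
begin



interpretation QS: vector_space "\<lambda>(q::rat) (v::complex). of_rat q * v"
  by unfold_locales (auto simp: algebra_simps of_rat_add of_rat_mult)

lemma span_mult_closed:
  assumes "\<forall>v\<in>B. z * v \<in> QS.span B" "w \<in> QS.span B"
  shows "z * w \<in> QS.span B"
  using assms(2)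
proof (induct rule: QS.span_induct_alt)
  case base then show ?case by (simp add: QS.span_zero)
next
  case (step c b w)
  have "z * (of_rat c * b + w) = of_rat c * (z*b) + z*w" by (simp add: algebra_simps)
  then show ?case using step assms(1) by (simp add: QS.span_add QS.span_scale)
qed

lemma span_mult_image:
  assumes "w \<in> QS.span A"
  shows "c * w \<in> QS.span ((\<lambda>a. c * a) ` A)"
  using assms
proof (induct rule: QS.span_induct_alt)
  case base then show ?case by (simp add: QS.span_zero)
next
  case (step d b w)
  have "c * (of_rat d * b + w) = of_rat d * (c*b) + c*w" by (simp add: algebra_simps)
  moreover have "c*b \<in> QS.span ((\<lambda>a. c * a) ` A)" using step by (intro QS.span_base) auto
  ultimately show ?case using step by (simp add: QS.span_add QS.span_scale)
qed




lemma alg_from_span: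
  assumes fin: "finite B" and one: "1 \<in> QS.span B" and cl: "\<forall>v\<in>B. z * v \<in> QS.span B"
  shows "algebraic z"
proof -
  have pw: "z ^ k \<in> QS.span B" for k
    by (induct k) (use one span_mult_closed[OF cl] in auto)  
  define N where "N = card B"
  show ?thesis
  proof (cases "inj_on (\<lambda>k. z ^ k) {..N}")
    case False
    then obtain i j where ij: "i \<le> N" "j \<le> N" "i \<noteq> j" "z ^ i = z ^ j"
      unfolding inj_on_def by auto  
    define p :: "complex poly" where "p = monom 1 i - monom 1 j"
    have "p \<noteq> 0" using ij(3) unfolding p_def
      by (metis coeff_diff coeff_monom diff_zero cancel_comm_monoid_add_class.diff_cancel one_neq_zero)  
    moreover have "poly p z = 0" using ij(4) by (simp add: p_def poly_monom)  
    moreover have "coeff p n \<in> \<int>" for n by (simp add: p_def coeff_monom)  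
    ultimately show ?thesis by (intro algebraicI[of p]) auto
  next
    case True
    define S where "S = (\<lambda>k. z ^ k) ` {..N}"
    have cS: "card S = Suc N" using True by (simp add: S_def card_image)  
    have fS: "finite S" by (simp add: S_def)  
    have sub: "S \<subseteq> QS.span B" using pw by (auto simp: S_def)  
    have "QS.dependent S"
    proof (rule ccontr)
      assume "\<not> QS.dependent S"
      then have "card S \<le> card B" using QS.independent_span_bound[OF fin _ sub] by auto  
      then show False using cS N_def by simp  
    qed
    then obtain u where u: "\<exists>v\<in>S. u v \<noteq> 0" "(\<Sum>v\<in>S. of_rat (u v) * v) = 0"
      using QS.dependent_finite[OF fS] by auto  
    define p :: "complex poly" where "p = (\<Sum>k\<le>N. monom (of_rat (u (z^k))) k)"
    have cp: "coeff p n = (if n \<le> N then of_rat (u (z^n)) else 0)" for n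
      by (simp add: p_def coeff_sum coeff_monom)  
    have "poly p z = (\<Sum>k\<le>N. of_rat (u (z^k)) * z^k)"
      by (simp add: p_def poly_sum poly_monom)  
    also have "\<dots> = (\<Sum>v\<in>S. of_rat (u v) * v)"
      unfolding S_def by (subst sum.reindex[OF True]) simp
    finally have "poly p z = 0" using u(2) by simp  
    moreover have "p \<noteq> 0"
    proof
      assume "p = 0"
      from u(1) obtain k where "k \<le> N" "u (z^k) \<noteq> 0" by (auto simp: S_def)  
      then have "coeff p k \<noteq> 0" by (simp add: cp)  
      with \<open>p = 0\<close> show False by simp  
    qed
    moreover have "coeff p n \<in> \<rat>" for n by (simp add: cp)  
    ultimately show ?thesis by (intro algebraicI'[of p]) auto
  qed
qed




lemma alg_pow:
  assumes "algebraic x"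
  shows "\<exists>m>0. x ^ m \<in> QS.span ((\<lambda>i. x ^ i) ` {..<m})"
proof -
  obtain p where p: "\<forall>i. coeff p i \<in> \<rat>" "p \<noteq> 0" "poly p x = 0"
    using assms unfolding algebraic_altdef by auto  
  define m where "m = degree p"
  have lc: "coeff p m \<noteq> 0" using p(2) by (simp add: m_def)  
  have "m > 0"
  proof (rule ccontr)
    assume "\<not> m > 0"
    then have m0: "m = 0" by simp  
    have "poly p x = (\<Sum>i\<le>m. coeff p i * x ^ i)" by (simp add: poly_altdef m_def)  
    also have "\<dots> = coeff p 0" using m0 by simp  
    finally show False using p(3) lc m0 by simp  
  qed
  have r: "\<forall>i. \<exists>q. coeff p i = of_rat q" using p(1) by (auto simp: Rats_def)  
  then obtain c where c: "\<And>i. coeff p i = of_rat (c i)" using choice[OF r] by blast  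
  have "0 = (\<Sum>i\<le>m. coeff p i * x ^ i)" using p(3) by (simp add: poly_altdef m_def)  
  also have "\<dots> = (\<Sum>i<m. coeff p i * x ^ i) + coeff p m * x ^ m"
  proof -
    have "{..m} = {..<Suc m}" by auto  
    then show ?thesis by (simp only: sum.lessThan_Suc)  
  qed
  finally have e: "(\<Sum>i<m. of_rat (c i) * x^i) + of_rat (c m) * x^m = 0"
    using c by simp  
  have cm: "of_rat (c m) \<noteq> (0::complex)" using lc c by simp  
  have "(\<Sum>i<m. of_rat (- c i / c m) * x ^ i) = (\<Sum>i<m. - (of_rat (c i) * x^i) / of_rat (c m))"
    by (intro sum.cong refl) (simp add: of_rat_minus of_rat_divide)  
  also have "\<dots> = - (\<Sum>i<m. of_rat (c i) * x^i) / of_rat (c m)"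
    by (simp add: sum_divide_distrib[symmetric] sum_negf)  
  also have "\<dots> = x ^ m"
  proof -
    have "- (\<Sum>i<m. of_rat (c i) * x^i) = of_rat (c m) * x^m" using e by (simp only: neg_eq_iff_add_eq_0)  
    then show ?thesis using cm by simp  
  qed
  finally have "x ^ m = (\<Sum>i<m. of_rat (- c i / c m) * x ^ i)" by simp  
  also have "\<dots> \<in> QS.span ((\<lambda>i. x ^ i) ` {..<m})"
    by (intro QS.span_sum QS.span_scale QS.span_base) auto
  finally show ?thesis using \<open>m > 0\<close> by blast  
qed




lemma alg_plus_times:
  fixes x y :: complex
  assumes ax: "algebraic x" and ay: "algebraic y"
  shows "algebraic (x + y) \<and> algebraic (x * y)"
proof -
  obtain m where m: "m > 0" "x ^ m \<in> QS.span ((\<lambda>i. x ^ i) ` {..<m})" using alg_pow[OF ax] by blast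
  obtain n where n: "n > 0" "y ^ n \<in> QS.span ((\<lambda>i. y ^ i) ` {..<n})" using alg_pow[OF ay] by blast
  define B where "B = (\<lambda>(i,j). x ^ i * y ^ j) ` ({..<m} \<times> {..<n})"
  have fin: "finite B" by (simp add: B_def)
  have one: "1 \<in> QS.span B"
  proof -
    have "x ^ 0 * y ^ 0 \<in> B" unfolding B_def using m n by force
    then show ?thesis by (simp add: QS.span_base)
  qed
  have clx: "\<forall>v\<in>B. x * v \<in> QS.span B"
  proof
    fix v assume "v \<in> B"
    then obtain i j where ij: "i < m" "j < n" "v = x ^ i * y ^ j" by (auto simp: B_def)
    show "x * v \<in> QS.span B"
    proof (cases "Suc i < m")
      case True
      then have "x ^ Suc i * y ^ j \<in> B" unfolding B_def using ij by force
      then show ?thesis using ij by (simp add: QS.span_base mult.assoc)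
    next
      case False
      then have si: "Suc i = m" using ij by simp
      have "y ^ j * x ^ m \<in> QS.span ((\<lambda>a. y ^ j * a) ` (\<lambda>i. x ^ i) ` {..<m})"
        by (rule span_mult_image[OF m(2)])
      moreover have "(\<lambda>a. y ^ j * a) ` (\<lambda>i. x ^ i) ` {..<m} \<subseteq> B"
        unfolding B_def using ij by (force simp: mult.commute)
      ultimately have "y ^ j * x ^ m \<in> QS.span B" using QS.span_mono by blast
      moreover have "x * v = y ^ j * x ^ m" using ij si[symmetric] by (simp add: mult_ac)
      ultimately show ?thesis by simp
    qed
  qed
  have cly: "\<forall>v\<in>B. y * v \<in> QS.span B"
  proof
    fix v assume "v \<in> B"
    then obtain i j where ij: "i < m" "j < n" "v = x ^ i * y ^ j" by (auto simp: B_def)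
    show "y * v \<in> QS.span B"
    proof (cases "Suc j < n")
      case True
      then have "x ^ i * y ^ Suc j \<in> B" unfolding B_def using ij by force
      then have "y * v \<in> B" using ij by (simp add: mult_ac)
      then show ?thesis by (rule QS.span_base)
    next
      case False
      then have si: "Suc j = n" using ij by simp
      have "x ^ i * y ^ n \<in> QS.span ((\<lambda>a. x ^ i * a) ` (\<lambda>j. y ^ j) ` {..<n})"
        by (rule span_mult_image[OF n(2)])
      moreover have "(\<lambda>a. x ^ i * a) ` (\<lambda>j. y ^ j) ` {..<n} \<subseteq> B"
        unfolding B_def using ij by force
      ultimately have "x ^ i * y ^ n \<in> QS.span B" using QS.span_mono by blast
      moreover have "y * v = x ^ i * y ^ n" using ij si[symmetric] by (simp add: mult_ac)
      ultimately show ?thesis by simp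
    qed
  qed
  have "\<forall>v\<in>B. (x + y) * v \<in> QS.span B"
    using clx cly by (simp add: distrib_right QS.span_add)
  moreover have "\<forall>v\<in>B. (x * y) * v \<in> QS.span B"
  proof
    fix v assume "v \<in> B"
    then have "y * v \<in> QS.span B" using cly by blast
    then have "x * (y * v) \<in> QS.span B" using span_mult_closed[OF clx] by blast
    then show "(x * y) * v \<in> QS.span B" by (simp add: mult.assoc)
  qed
  ultimately show ?thesis using alg_from_span[OF fin one] by blast
qed

lemma alg_sum: "finite A \<Longrightarrow> (\<And>a. a \<in> A \<Longrightarrow> algebraic (f a :: complex)) \<Longrightarrow> algebraic (sum f A)"
  by (induct A rule: finite_induct) (auto simp: alg_plus_times)




lemma kQbar_add: "a \<in> kQbar \<Longrightarrow> b \<in> kQbar \<Longrightarrow> a + b \<in> kQbar"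
  and kQbar_mult: "a \<in> kQbar \<Longrightarrow> b \<in> kQbar \<Longrightarrow> a * b \<in> kQbar"
  by (auto simp: kQbar_def alg_plus_times)

lemma kQbar_sum: "finite A \<Longrightarrow> (\<And>a. a \<in> A \<Longrightarrow> f a \<in> kQbar) \<Longrightarrow> sum f A \<in> kQbar"
  by (auto simp: kQbar_def intro: alg_sum)

lemma kQbar_0 [simp]: "0 \<in> kQbar" and kQbar_1 [simp]: "1 \<in> kQbar"
  by (auto simp: kQbar_def)

lemma kT_add: "p \<in> kT \<Longrightarrow> q \<in> kT \<Longrightarrow> p + q \<in> kT"
  by (auto simp: kT_def intro: kQbar_add)

lemma kT_mult: "p \<in> kT \<Longrightarrow> q \<in> kT \<Longrightarrow> p * q \<in> kT"
  unfolding kT_def by (auto simp: coeff_mult intro!: kQbar_sum kQbar_mult)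

lemma kT_0 [simp]: "0 \<in> kT" and kT_1 [simp]: "1 \<in> kT"
  by (auto simp: kT_def coeff_1)

lemma kT_const: "a \<in> kQbar \<Longrightarrow> [:a:] \<in> kT"
  by (auto simp: kT_def coeff_pCons split: nat.splits)

lemma kT_pCons: "pCons a p \<in> kT \<longleftrightarrow> a \<in> kQbar \<and> p \<in> kT"
  unfolding kT_def
proof safe
  fix i assume "\<forall>i. coeff (pCons a p) i \<in> kQbar"
  from this[rule_format, of 0] this[rule_format, of "Suc i"]
  show "a \<in> kQbar" "coeff p i \<in> kQbar" by auto
next
  fix i assume "a \<in> kQbar" "\<forall>i. coeff p i \<in> kQbar"
  then show "coeff (pCons a p) i \<in> kQbar" by (cases i) auto
qed

lemma kT_X [simp]: "[:0, 1:] \<in> kT"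
  by (simp add: kT_pCons kT_const)

lemma kT_sum: "finite A \<Longrightarrow> (\<And>a. a \<in> A \<Longrightarrow> f a \<in> kT) \<Longrightarrow> sum f A \<in> kT"
  by (induct A rule: finite_induct) (auto intro: kT_add)

lemma kT_power: "p \<in> kT \<Longrightarrow> p ^ n \<in> kT"
  by (induct n) (auto intro: kT_mult)

lemma kTT_iff: "P \<in> kTT \<longleftrightarrow> (\<forall>i. coeff P i \<in> kT)"
  by (simp add: kTT_def kT_def)

lemma kTT_add: "P \<in> kTT \<Longrightarrow> Q \<in> kTT \<Longrightarrow> P + Q \<in> kTT"
  by (auto simp: kTT_iff intro: kT_add)

lemma kTT_mult: "P \<in> kTT \<Longrightarrow> Q \<in> kTT \<Longrightarrow> P * Q \<in> kTT"
  unfolding kTT_iff by (auto simp: coeff_mult intro!: kT_sum kT_mult)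

lemma kTT_0 [simp]: "0 \<in> kTT" and kTT_1 [simp]: "1 \<in> kTT"
  by (auto simp: kTT_iff coeff_1)

lemma kTT_const: "p \<in> kT \<Longrightarrow> [:p:] \<in> kTT"
  by (auto simp: kTT_iff coeff_pCons split: nat.splits)

lemma kTT_pCons: "pCons a P \<in> kTT \<longleftrightarrow> a \<in> kT \<and> P \<in> kTT"
  unfolding kTT_iff
proof safe
  fix i assume "\<forall>i. coeff (pCons a P) i \<in> kT"
  from this[rule_format, of 0] this[rule_format, of "Suc i"]
  show "a \<in> kT" "coeff P i \<in> kT" by auto
next
  fix i assume "a \<in> kT" "\<forall>i. coeff P i \<in> kT"
  then show "coeff (pCons a P) i \<in> kT" by (cases i) auto
qed

lemma kTT_neg: "P \<in> kTT \<Longrightarrow> - P \<in> kTT"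
proof -
  assume "P \<in> kTT"
  moreover have "- 1 \<in> kTT"
  proof -
    have "[:[:-1:]:] \<in> kTT" using kTT_const[OF kT_const[of "-1"]] by (simp add: kQbar_def)
    moreover have "[:[:-1:]:] = (- 1 :: complex poly poly)" by (simp add: one_pCons minus_pCons)
    ultimately show ?thesis by simp
  qed
  ultimately have "(- 1) * P \<in> kTT" by (rule kTT_mult[rotated])
  then show ?thesis by simp
qed

lemma ordT_eq: "g \<noteq> 0 \<Longrightarrow> (GREATEST r. [:0, 1:] ^ r dvd g) = order 0 g"
proof (rule Greatest_equality)
  assume "g \<noteq> 0"
  show "[:0, 1:] ^ order 0 g dvd g" using order_1[of 0 g] by simp
  fix y assume "[:0, 1:] ^ y dvd g"
  then show "y \<le> order 0 g" using order_divides[of 0 y g] \<open>g \<noteq> 0\<close> by simp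
qed




definition TV :: "('r::comm_ring_1 \<Rightarrow> ereal) \<Rightarrow> bool" where
  "TV v \<longleftrightarrow> v 0 = -\<infinity> \<and> v 1 = 0 \<and> (\<forall>p. v p \<noteq> \<infinity>) \<and> (\<forall>p q. v (p*q) = v p + v q) \<and>
     (\<forall>p q. v (p+q) \<le> max (v p) (v q)) \<and> (\<forall>p q. v p \<noteq> v q \<longrightarrow> v (p+q) = max (v p) (v q))"

lemma TV_comp:
  assumes "TV v" "h 0 = 0" "h 1 = 1" "\<And>p q. h (p*q) = h p * h q" "\<And>p q. h (p+q) = h p + h q"
  shows "TV (\<lambda>p. v (h p))"
  using assms unfolding TV_def by auto

definition Fv :: "real \<Rightarrow> complex poly \<Rightarrow> ereal" where
  "Fv a p = (if p = 0 then -\<infinity> else ereal (real (order 0 p) * a))"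

lemma ord_add_ge:
  fixes p q :: "complex poly"
  assumes "p + q \<noteq> 0"
  shows "min (order 0 p) (order 0 q) \<le> order 0 (p + q) \<or> p = 0 \<or> q = 0"
proof (cases "p = 0 \<or> q = 0")
  case False
  let ?k = "min (order 0 p) (order 0 q)"
  have "[:0,1:] ^ ?k dvd p" using order_divides[of 0 ?k p] by simp
  moreover have "[:0,1:] ^ ?k dvd q" using order_divides[of 0 ?k q] by simp
  ultimately have "[:0,1:] ^ ?k dvd p + q" by (rule dvd_add)
  then show ?thesis using order_divides[of 0 ?k "p+q"] assms by simp
qed auto

lemma ord_add_eq:
  fixes p q :: "complex poly"
  assumes "p \<noteq> 0" "q \<noteq> 0" "order 0 p < order 0 q"
  shows "p + q \<noteq> 0 \<and> order 0 (p + q) = order 0 p"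
proof -
  have pq: "p + q \<noteq> 0"
  proof
    assume "p + q = 0"
    then have "q = - p" by (simp add: add_eq_0_iff)
    then show False using assms(3) by simp
  qed
  have ge: "order 0 p \<le> order 0 (p + q)" using ord_add_ge[OF pq] assms by auto
  have "\<not> Suc (order 0 p) \<le> order 0 (p + q)"
  proof
    assume h: "Suc (order 0 p) \<le> order 0 (p + q)"
    have "[:0,1:] ^ Suc (order 0 p) dvd p + q" using order_divides[of 0 "Suc (order 0 p)" "p+q"] h by simp
    moreover have "[:0,1:] ^ Suc (order 0 p) dvd q" using order_divides[of 0 "Suc (order 0 p)" q] assms by simp
    ultimately have "[:0,1:] ^ Suc (order 0 p) dvd (p + q) - q" by (rule dvd_diff)
    then have "Suc (order 0 p) \<le> order 0 p" using order_divides[of 0 "Suc (order 0 p)" p] assms by simp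
    then show False by simp
  qed
  with ge pq show ?thesis by simp
qed

lemma Fv_zero_iff: "Fv a p = -\<infinity> \<longleftrightarrow> p = 0"
  by (simp add: Fv_def)

lemma TV_Fv:
  assumes a: "a < 0"
  shows "TV (Fv a)"
  unfolding TV_def
proof (intro conjI allI impI)
  show "Fv a 0 = -\<infinity>" "Fv a 1 = 0" by (simp_all add: Fv_def)
  fix p q :: "complex poly"
  show "Fv a p \<noteq> \<infinity>" by (simp add: Fv_def)
  show "Fv a (p * q) = Fv a p + Fv a q"
    by (cases "p = 0 \<or> q = 0") (auto simp: Fv_def order_mult distrib_right)
  show "Fv a (p + q) \<le> max (Fv a p) (Fv a q)"
  proof (cases "p = 0 \<or> q = 0 \<or> p + q = 0")
    case True then show ?thesis by (auto simp: Fv_def)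
  next
    case False
    then have m: "min (order 0 p) (order 0 q) \<le> order 0 (p + q)" using ord_add_ge[of p q] by auto
    show ?thesis
    proof (cases "order 0 p \<le> order 0 q")
      case True
      then have "real (order 0 (p+q)) * a \<le> real (order 0 p) * a"
        using m a by (intro mult_right_mono_neg) auto
      then show ?thesis using False by (auto simp: Fv_def le_max_iff_disj)
    next
      case False': False
      then have "real (order 0 (p+q)) * a \<le> real (order 0 q) * a"
        using m a by (intro mult_right_mono_neg) auto
      then show ?thesis using False by (auto simp: Fv_def le_max_iff_disj)
    qed
  qed
  assume ne: "Fv a p \<noteq> Fv a q"
  show "Fv a (p + q) = max (Fv a p) (Fv a q)"
  proof (cases "p = 0 \<or> q = 0")
    case True then show ?thesis by (auto simp: Fv_def)
  next
    case False
    then have "order 0 p \<noteq> order 0 q" using ne by (auto simp: Fv_def)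
    then consider "order 0 p < order 0 q" | "order 0 q < order 0 p" by linarith
    then show ?thesis
    proof cases
      case 1
      then have e: "p + q \<noteq> 0" "order 0 (p + q) = order 0 p" using ord_add_eq[of p q] False by auto
      have "real (order 0 q) * a \<le> real (order 0 p) * a" using 1 a by (intro mult_right_mono_neg) auto
      then show ?thesis using e False by (auto simp: Fv_def max_def)
    next
      case 2
      then have e: "q + p \<noteq> 0" "order 0 (q + p) = order 0 q" using ord_add_eq[of q p] False by auto
      have "real (order 0 p) * a \<le> real (order 0 q) * a" using 2 a by (intro mult_right_mono_neg) auto
      then show ?thesis using e False by (auto simp: Fv_def max_def add.commute)
    qed
  qed
qed




lemma ereal_shift_less: "(a + ereal r < b + ereal r) \<longleftrightarrow> a < b"
  by (cases a; cases b) simp_all  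
lemma ereal_shift_le: "(a + ereal r \<le> b + ereal r) \<longleftrightarrow> a \<le> b"
  by (cases a; cases b) simp_all  
lemma ereal_shift_eq: "(a + ereal r = b + ereal r) \<longleftrightarrow> a = b"
  by (cases a; cases b) simp_all  
lemma ereal_add_lt_le: "(a::ereal) < c \<Longrightarrow> b \<le> d \<Longrightarrow> c \<noteq> \<infinity> \<Longrightarrow> d \<noteq> \<infinity> \<Longrightarrow> d \<noteq> -\<infinity> \<Longrightarrow> a + b < c + d"
proof -
  assume h: "a < c" "b \<le> d" "c \<noteq> \<infinity>" "d \<noteq> \<infinity>" "d \<noteq> -\<infinity>"
  have "a + b \<le> a + d" using h(2) by (rule add_mono[OF order_refl])  
  also have "a + d < c + d"
  proof -
    have "\<bar>d\<bar> \<noteq> \<infinity>" using h by (cases d) auto  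
    from ereal_less_add[OF this h(1)] show ?thesis by (simp add: add.commute)  
  qed
  finally show ?thesis .
qed

lemma TV_simps:
  assumes "TV v"
  shows "v 0 = -\<infinity>" "v 1 = 0" "v p \<noteq> \<infinity>" "v (p*q) = v p + v q"
    "v (p+q) \<le> max (v p) (v q)" "v p \<noteq> v q \<Longrightarrow> v (p+q) = max (v p) (v q)"
  using assms unfolding TV_def by auto  

lemma vsum_le:
  assumes "TV v" "finite A" "\<And>i. i \<in> A \<Longrightarrow> v (f i) + ereal e \<le> c"
  shows "v (sum f A) + ereal e \<le> c"
  using assms(2,3)
proof (induct A rule: finite_induct)
  case empty then show ?case using TV_simps[OF assms(1)] by simp  
next
  case (insert x F)
  have a: "v (f x) + ereal e \<le> c" "v (sum f F) + ereal e \<le> c" using insert by auto  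
  have "v (sum f (insert x F)) = v (f x + sum f F)" using insert by simp  
  also have "\<dots> \<le> max (v (f x)) (v (sum f F))" by (rule TV_simps(5)[OF assms(1)])  
  finally have "v (sum f (insert x F)) + ereal e \<le> max (v (f x)) (v (sum f F)) + ereal e"
    by (simp add: ereal_shift_le)  
  also have "\<dots> \<le> c" using a by (cases "v (f x) \<le> v (sum f F)") (auto simp: max_def)  
  finally show ?case .
qed

lemma vsum_lt:
  assumes "TV v" "finite A" "\<And>i. i \<in> A \<Longrightarrow> v (f i) + ereal e < c" "-\<infinity> < c"
  shows "v (sum f A) + ereal e < c"
  using assms(2,3)
proof (induct A rule: finite_induct)
  case empty then show ?case using TV_simps[OF assms(1)] assms(4) by simp  
next
  case (insert x F)
  have a: "v (f x) + ereal e < c" "v (sum f F) + ereal e < c" using insert by auto  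
  have "v (sum f (insert x F)) = v (f x + sum f F)" using insert by simp  
  also have "\<dots> \<le> max (v (f x)) (v (sum f F))" by (rule TV_simps(5)[OF assms(1)])  
  finally have "v (sum f (insert x F)) + ereal e \<le> max (v (f x)) (v (sum f F)) + ereal e"
    by (simp add: ereal_shift_le)  
  also have "\<dots> < c" using a by (cases "v (f x) \<le> v (sum f F)") (auto simp: max_def)  
  finally show ?case .
qed

lemma vsum_unique:
  assumes "TV v" "finite A" "i0 \<in> A" "v (f i0) + ereal e = c"
    "\<And>i. i \<in> A \<Longrightarrow> i \<noteq> i0 \<Longrightarrow> v (f i) + ereal e < c" "-\<infinity> < c"
  shows "v (sum f A) + ereal e = c"
proof -
  have s: "sum f A = f i0 + sum f (A - {i0})" using assms(2,3) by (simp add: sum.remove)  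
  have "v (sum f (A - {i0})) + ereal e < c"
    by (rule vsum_lt[OF assms(1)]) (use assms in auto)  
  then have lt: "v (sum f (A - {i0})) < v (f i0)" using assms(4) by (metis ereal_shift_less)  
  have "v (f i0 + sum f (A - {i0})) = max (v (f i0)) (v (sum f (A - {i0})))"
    using lt by (intro TV_simps(6)[OF assms(1)]) simp  
  also have "\<dots> = v (f i0)" using lt by simp  
  finally have "v (sum f A) = v (f i0)" by (simp only: s)  
  then show ?thesis using assms(4) by simp  
qed

definition tm :: "(complex poly \<Rightarrow> ereal) \<Rightarrow> real \<Rightarrow> complex poly poly \<Rightarrow> nat \<Rightarrow> ereal" where
  "tm v b P j = v (coeff P j) + ereal (real j * b)"

definition G :: "(complex poly \<Rightarrow> ereal) \<Rightarrow> real \<Rightarrow> complex poly poly \<Rightarrow> ereal" where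
  "G v b P = Max (tm v b P ` {..degree P})"

context
  fixes v :: "complex poly \<Rightarrow> ereal" and b :: real
  assumes tv: "TV v" and nd: "\<And>p. v p = -\<infinity> \<Longrightarrow> p = 0"
begin

lemma tm_high: "j > degree P \<Longrightarrow> tm v b P j = -\<infinity>"
  using TV_simps(1)[OF tv] by (simp add: tm_def coeff_eq_0)  

lemma G_ge: "tm v b P j \<le> G v b P"
proof (cases "j \<le> degree P")
  case True then show ?thesis unfolding G_def by (intro Max_ge) auto  
next
  case False then show ?thesis by (simp add: tm_high)  
qed

lemma G_le: "(\<And>j. tm v b P j \<le> c) \<Longrightarrow> G v b P \<le> c"
  unfolding G_def by (subst Max_le_iff) auto  

lemma G_attain: "\<exists>j\<le>degree P. tm v b P j = G v b P"
proof -
  have "G v b P \<in> tm v b P ` {..degree P}" unfolding G_def by (intro Max_in) auto  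
  then show ?thesis by auto  
qed

lemma tm_ninf: "tm v b P j \<noteq> \<infinity>"
  using TV_simps(3)[OF tv] by (simp add: tm_def)  

lemma G_ninf: "G v b P \<noteq> \<infinity>"
  using G_attain[of P] tm_ninf by metis  

lemma G_0: "G v b 0 = -\<infinity>"
  using G_attain[of 0] TV_simps(1)[OF tv] by (simp add: tm_def)  

lemma G_pos: "P \<noteq> 0 \<Longrightarrow> -\<infinity> < G v b P"
proof -
  assume "P \<noteq> 0"
  then have "coeff P (degree P) \<noteq> 0" by simp  
  then have "v (coeff P (degree P)) \<noteq> -\<infinity>" using nd by blast  
  then have "-\<infinity> < tm v b P (degree P)" by (simp add: tm_def)  
  also have "\<dots> \<le> G v b P" by (rule G_ge)  
  finally show ?thesis .
qed

lemma G_const: "G v b [:p:] = v p"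
proof -
  have "tm v b [:p:] ` {..degree [:p:]} = {v p}" by (auto simp: tm_def)  
  then show ?thesis by (simp add: G_def)  
qed

lemma G_Y: "G v b [:0, 1:] = ereal b"
proof (rule antisym)
  show "G v b [:0, 1:] \<le> ereal b"
  proof (rule G_le)
    fix j show "tm v b [:0, 1:] j \<le> ereal b"
      using TV_simps(1,2)[OF tv] by (cases j) (auto simp: tm_def coeff_pCons split: nat.splits)  
  qed
  have "tm v b [:0, 1:] 1 = ereal b" using TV_simps(2)[OF tv] by (simp add: tm_def)  
  then show "ereal b \<le> G v b [:0, 1:]" using G_ge by metis  
qed

lemma tm_prod:
  assumes "i \<le> n"
  shows "v (coeff P i * coeff Q (n - i)) + ereal (real n * b) = tm v b P i + tm v b Q (n - i)"
proof -
  have "real n * b = real i * b + real (n - i) * b" using assms by (simp add: distrib_right[symmetric])  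
  then show ?thesis using TV_simps(4)[OF tv] by (simp add: tm_def add_ac)  
qed

lemma G_mult: "G v b (P * Q) = G v b P + G v b Q"
proof (cases "P = 0 \<or> Q = 0")
  case True then show ?thesis using G_0 G_ninf by auto  
next
  case False
  then have nz: "P \<noteq> 0" "Q \<noteq> 0" by auto  
  define gP where "gP = G v b P"
  define gQ where "gQ = G v b Q"
  have fP: "gP \<noteq> \<infinity>" "gP \<noteq> -\<infinity>" using G_ninf G_pos[OF nz(1)] by (auto simp: gP_def)  
  have fQ: "gQ \<noteq> \<infinity>" "gQ \<noteq> -\<infinity>" using G_ninf G_pos[OF nz(2)] by (auto simp: gQ_def)  
  define S1 where "S1 = {j. j \<le> degree P \<and> tm v b P j = gP}"
  define S2 where "S2 = {j. j \<le> degree Q \<and> tm v b Q j = gQ}"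
  have fS: "finite S1" "finite S2" by (auto simp: S1_def S2_def)  
  have neS: "S1 \<noteq> {}" "S2 \<noteq> {}" using G_attain[of P] G_attain[of Q] by (auto simp: S1_def S2_def gP_def gQ_def)  
  define J1 where "J1 = Max S1"
  define J2 where "J2 = Max S2"
  have J1: "tm v b P J1 = gP" using Max_in[OF fS(1) neS(1)] by (auto simp: J1_def S1_def)  
  have J2: "tm v b Q J2 = gQ" using Max_in[OF fS(2) neS(2)] by (auto simp: J2_def S2_def)  
  have J1g: "tm v b P j < gP" if "j > J1" for j
  proof (cases "j \<le> degree P")
    case True
    have "j \<notin> S1" using that Max_ge[OF fS(1)] by (force simp: J1_def)  
    then have "tm v b P j \<noteq> gP" using True by (auto simp: S1_def)  
    moreover have "tm v b P j \<le> gP" unfolding gP_def by (rule G_ge)  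
    ultimately show ?thesis by simp  
  next
    case False then show ?thesis using fP tm_high by (simp add: not_le)  
  qed
  have J2g: "tm v b Q j < gQ" if "j > J2" for j
  proof (cases "j \<le> degree Q")
    case True
    have "j \<notin> S2" using that Max_ge[OF fS(2)] by (force simp: J2_def)  
    then have "tm v b Q j \<noteq> gQ" using True by (auto simp: S2_def)  
    moreover have "tm v b Q j \<le> gQ" unfolding gQ_def by (rule G_ge)  
    ultimately show ?thesis by simp  
  next
    case False then show ?thesis using fQ tm_high by (simp add: not_le)  
  qed
  have up: "G v b (P * Q) \<le> gP + gQ"
  proof (rule G_le)
    fix n
    have "v (coeff (P * Q) n) + ereal (real n * b) \<le> gP + gQ"
      unfolding coeff_mult
    proof (rule vsum_le[OF tv])
      fix i assume "i \<in> {..n}"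
      then have "v (coeff P i * coeff Q (n - i)) + ereal (real n * b) = tm v b P i + tm v b Q (n - i)"
        by (intro tm_prod) auto  
      also have "\<dots> \<le> gP + gQ" unfolding gP_def gQ_def by (intro add_mono G_ge)  
      finally show "v (coeff P i * coeff Q (n - i)) + ereal (real n * b) \<le> gP + gQ" .
    qed auto
    then show "tm v b (P * Q) n \<le> gP + gQ" by (simp add: tm_def)  
  qed
  define n where "n = J1 + J2"
  have "v (coeff (P * Q) n) + ereal (real n * b) = gP + gQ"
    unfolding coeff_mult
  proof (rule vsum_unique[OF tv, of _ J1])
    show "J1 \<in> {..n}" by (simp add: n_def)  
    show "v (coeff P J1 * coeff Q (n - J1)) + ereal (real n * b) = gP + gQ"
      using tm_prod[of J1 n P Q] J1 J2 by (simp add: n_def)  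
    show "-\<infinity> < gP + gQ" using fP fQ by (cases gP; cases gQ) auto  
    fix i assume i: "i \<in> {..n}" "i \<noteq> J1"
    have e: "v (coeff P i * coeff Q (n - i)) + ereal (real n * b) = tm v b P i + tm v b Q (n - i)"
      using i by (intro tm_prod) auto  
    show "v (coeff P i * coeff Q (n - i)) + ereal (real n * b) < gP + gQ"
    proof (cases "i > J1")
      case True
      have "tm v b P i + tm v b Q (n - i) < gP + gQ"
        using J1g[OF True] G_ge[of Q "n - i"] fP fQ unfolding gQ_def by (intro ereal_add_lt_le) auto  
      then show ?thesis using e by simp  
    next
      case False
      then have "n - i > J2" using i by (simp add: n_def)  
      have "tm v b Q (n - i) + tm v b P i < gQ + gP"
        using J2g[OF \<open>n - i > J2\<close>] G_ge[of P i] fP fQ unfolding gP_def by (intro ereal_add_lt_le) auto  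
      then show ?thesis using e by (simp add: add.commute)  
    qed
  qed auto
  then have "gP + gQ \<le> G v b (P * Q)" using G_ge[of "P * Q" n] by (simp add: tm_def)  
  with up show ?thesis by (simp add: gP_def gQ_def)  
qed

lemma tm_add_le: "tm v b (P + Q) j \<le> max (tm v b P j) (tm v b Q j)"
proof -
  have "v (coeff P j + coeff Q j) \<le> max (v (coeff P j)) (v (coeff Q j))" by (rule TV_simps(5)[OF tv])  
  then have "v (coeff P j + coeff Q j) + ereal (real j * b) \<le> max (v (coeff P j)) (v (coeff Q j)) + ereal (real j * b)"
    by (simp add: ereal_shift_le)  
  also have "\<dots> = max (tm v b P j) (tm v b Q j)"
    by (cases "v (coeff P j) \<le> v (coeff Q j)") (auto simp: tm_def max_def ereal_shift_le)  
  finally show ?thesis by (simp add: tm_def)  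
qed

lemma G_add_le: "G v b (P + Q) \<le> max (G v b P) (G v b Q)"
proof (rule G_le)
  fix j
  have "tm v b (P + Q) j \<le> max (tm v b P j) (tm v b Q j)" by (rule tm_add_le)  
  also have "\<dots> \<le> max (G v b P) (G v b Q)" by (intro max.mono G_ge)  
  finally show "tm v b (P + Q) j \<le> max (G v b P) (G v b Q)" .
qed

lemma G_add_gt: "G v b Q < G v b P \<Longrightarrow> G v b (P + Q) = G v b P"
proof -
  assume lt: "G v b Q < G v b P"
  obtain j where j: "tm v b P j = G v b P" using G_attain by blast  
  have "tm v b Q j < tm v b P j" using G_ge[of Q j] lt j by simp  
  then have "v (coeff Q j) < v (coeff P j)" by (simp add: tm_def ereal_shift_less)  
  then have "v (coeff P j + coeff Q j) = max (v (coeff P j)) (v (coeff Q j))"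
    by (intro TV_simps(6)[OF tv]) simp  
  also have "\<dots> = v (coeff P j)" using \<open>v (coeff Q j) < v (coeff P j)\<close> by simp  
  finally have "v (coeff P j + coeff Q j) = v (coeff P j)" .
  then have "tm v b (P + Q) j = G v b P" using j by (simp add: tm_def)  
  then have "G v b P \<le> G v b (P + Q)" using G_ge by metis  
  moreover have "G v b (P + Q) \<le> G v b P" using G_add_le[of P Q] lt by simp  
  ultimately show ?thesis by simp  
qed

lemma TV_G: "TV (G v b)"
  unfolding TV_def
proof (intro conjI allI impI)
  show "G v b 0 = -\<infinity>" by (rule G_0)  
  show "G v b 1 = 0" using G_const[of 1] TV_simps(2)[OF tv] by (simp add: one_pCons)  
  fix P Q
  show "G v b P \<noteq> \<infinity>" by (rule G_ninf)  
  show "G v b (P * Q) = G v b P + G v b Q" by (rule G_mult)  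
  show "G v b (P + Q) \<le> max (G v b P) (G v b Q)" by (rule G_add_le)  
  assume "G v b P \<noteq> G v b Q"
  then consider "G v b Q < G v b P" | "G v b P < G v b Q" by (meson linorder_neqE)  
  then show "G v b (P + Q) = max (G v b P) (G v b Q)"
  proof cases
    case 1 then show ?thesis using G_add_gt[OF 1] by (simp add: max.absorb1 less_imp_le)  
  next
    case 2 then show ?thesis using G_add_gt[OF 2] by (simp add: max.absorb2 less_imp_le add.commute)  
  qed
qed

end




lemma pCons_decomp: "pCons a p = [:a:] + [:0, 1:] * (p :: 'a::comm_semiring_1 poly)"
  by simp

definition RH :: "(complex poly \<Rightarrow> complex poly poly) \<Rightarrow> bool" where
  "RH \<psi> \<longleftrightarrow> \<psi> 0 = 0 \<and> \<psi> 1 = 1 \<and> (\<forall>p q. \<psi> (p * q) = \<psi> p * \<psi> q) \<and> (\<forall>p q. \<psi> (p + q) = \<psi> p + \<psi> q)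
     \<and> (\<forall>a. \<psi> [:a:] = [:[:a:]:]) \<and> (\<forall>g\<in>kT. \<psi> g \<in> kTT)"

lemma RH_j1: "RH j1"
  unfolding RH_def j1_def by (auto simp: one_pCons intro: kTT_const kT_const)

lemma j2_add: "j2 (p + q) = j2 p + j2 q"
  unfolding j2_def by (rule poly_eqI) (simp add: coeff_map_poly)

lemma j2_smult: "j2 (smult a p) = smult [:a:] (j2 p)"
  unfolding j2_def by (rule map_poly_smult) auto

lemma j2_pCons: "j2 (pCons a p) = pCons [:a:] (j2 p)"
  unfolding j2_def by (rule map_poly_pCons) simp

lemma j2_0 [simp]: "j2 0 = 0"
  by (simp add: j2_def)

lemma j2_mult: "j2 (p * q) = j2 p * j2 q"
  by (induct p) (simp_all add: j2_add j2_smult j2_pCons)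

lemma j2_const: "j2 [:a:] = [:[:a:]:]"
  by (simp add: j2_pCons)

lemma j2_kTT: "g \<in> kT \<Longrightarrow> j2 g \<in> kTT"
  unfolding kTT_iff
proof
  fix i assume "g \<in> kT"
  then have "coeff g i \<in> kQbar" by (simp add: kT_def)
  then show "coeff (j2 g) i \<in> kT" unfolding j2_def by (simp add: coeff_map_poly kT_const)
qed

lemma RH_j2: "RH j2"
  unfolding RH_def using j2_add j2_mult j2_const j2_kTT
  by (auto simp: one_pCons j2_def)

definition Zs :: "complex poly poly" where "Zs = [:[:0, 1:], 1:]"

lemma Delta_alt: "Delta g = pcompose (j2 g) Zs"
proof -
  have "map_poly (\<lambda>c. [:[:c:]:]) g = map_poly (\<lambda>q. [:q:]) (map_poly (\<lambda>c. [:c:]) g)"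
    by (subst map_poly_map_poly) (auto simp: o_def)
  then show ?thesis by (simp add: Delta_def j2_def Zs_def pcompose_altdef)
qed

lemma Zs_kTT: "Zs \<in> kTT"
  unfolding Zs_def by (auto simp: kTT_pCons kT_pCons kT_const kTT_const)

lemma Delta_kTT: "g \<in> kT \<Longrightarrow> Delta g \<in> kTT"
proof (induct g)
  case 0 then show ?case by (simp add: Delta_alt j2_def)
next
  case (pCons a p)
  then have "a \<in> kQbar" "p \<in> kT" by (auto simp: kT_pCons)
  have "Delta (pCons a p) = [:[:a:]:] + Zs * Delta p"
    by (simp add: Delta_alt j2_pCons pcompose_pCons)
  then show ?case using pCons \<open>a \<in> kQbar\<close> \<open>p \<in> kT\<close>
    by (auto intro!: kTT_add kTT_mult Zs_kTT kTT_const kT_const)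
qed

lemma RH_Delta: "RH Delta"
  unfolding RH_def using Delta_kTT
  by (auto simp: Delta_alt j2_add j2_mult j2_const pcompose_add pcompose_mult one_pCons j2_pCons
      j2_def[of 0])




definition VkT :: "(complex poly \<Rightarrow> ereal) \<Rightarrow> bool" where
  "VkT \<phi> \<longleftrightarrow> (\<forall>g\<in>kT. \<phi> g \<noteq> \<infinity>) \<and> \<phi> 0 = -\<infinity> \<and>
     (\<forall>g\<in>kT. \<forall>h\<in>kT. \<phi> (g * h) = \<phi> g + \<phi> h \<and> \<phi> (g + h) \<in> trop_hyperadd (\<phi> g) (\<phi> h)) \<and>
     (\<forall>a\<in>kQbar. \<phi> [:a:] = (if a = 0 then -\<infinity> else 0))"

lemma hyper_le: "u \<in> trop_hyperadd s t \<Longrightarrow> u \<le> max s t"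
  by (auto simp: trop_hyperadd_def split: if_splits)  

lemma hyper_eq: "u \<in> trop_hyperadd s t \<Longrightarrow> s \<noteq> t \<Longrightarrow> u = max s t"
  by (auto simp: trop_hyperadd_def split: if_splits)  

lemma TV_hyper: "TV v \<Longrightarrow> v (p + q) \<in> trop_hyperadd (v p) (v q)"
  using TV_simps(5,6)[of v p q] by (auto simp: trop_hyperadd_def)  

lemma HomA_VkT: "\<phi> \<in> HomA \<Longrightarrow> VkT \<phi>"
  unfolding HomA_def trop_hom_def VkT_def by auto  

lemma TV_VkT: "TV v \<Longrightarrow> (\<And>a. a \<noteq> 0 \<Longrightarrow> v [:a:] = 0) \<Longrightarrow> VkT v"
  unfolding VkT_def using TV_simps[of v] TV_hyper[of v] by auto  

context
  fixes \<phi> :: "complex poly \<Rightarrow> ereal" and s :: ereal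
  assumes V: "VkT \<phi>" and sT: "\<phi> [:0, 1:] = s" and sneg: "s < 0"
begin

lemma V_mult: "g \<in> kT \<Longrightarrow> h \<in> kT \<Longrightarrow> \<phi> (g * h) = \<phi> g + \<phi> h"
  using V by (auto simp: VkT_def)  
lemma V_add: "g \<in> kT \<Longrightarrow> h \<in> kT \<Longrightarrow> \<phi> (g + h) \<in> trop_hyperadd (\<phi> g) (\<phi> h)"
  using V by (auto simp: VkT_def)  
lemma V_const: "a \<in> kQbar \<Longrightarrow> \<phi> [:a:] = (if a = 0 then -\<infinity> else 0)"
  using V by (auto simp: VkT_def)  
lemma V_ninf: "g \<in> kT \<Longrightarrow> \<phi> g \<noteq> \<infinity>"
  using V by (auto simp: VkT_def)  

lemma V_nonpos: "g \<in> kT \<Longrightarrow> \<phi> g \<le> 0"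
proof (induct g)
  case 0 then show ?case using V by (simp add: VkT_def)  
next
  case (pCons a p)
  then have a: "a \<in> kQbar" and p: "p \<in> kT" by (auto simp: kT_pCons)  
  have c: "\<phi> [:a:] \<le> 0" using V_const[OF a] by simp  
  have "\<phi> ([:0, 1:] * p) = s + \<phi> p" using V_mult[OF kT_X p] sT by simp  
  also have "\<dots> \<le> 0" using pCons(2)[OF p] sneg by (cases s; cases "\<phi> p") auto  
  finally have d: "\<phi> ([:0, 1:] * p) \<le> 0" .
  have "\<phi> (pCons a p) = \<phi> ([:a:] + [:0, 1:] * p)" by (simp only: pCons_decomp[of a p])  
  also have "\<dots> \<le> max (\<phi> [:a:]) (\<phi> ([:0, 1:] * p))"
    by (rule hyper_le[OF V_add[OF kT_const[OF a] kT_mult[OF kT_X p]]])  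
  also have "\<dots> \<le> 0" using c d by simp  
  finally show ?case .
qed

lemma V_pow: "\<phi> ([:0, 1:] ^ r) = ereal (real r) * s"
proof (induct r)
  case 0
  have "\<phi> [:1:] = 0" using V_const[of 1] by simp  
  then show ?case by (simp add: one_pCons)  
next
  case (Suc r)
  have "\<phi> ([:0, 1:] ^ Suc r) = \<phi> ([:0, 1:] * [:0, 1:] ^ r)" by simp  
  also have "\<dots> = s + ereal (real r) * s" using V_mult[OF kT_X kT_power[OF kT_X]] sT Suc by simp  
  also have "\<dots> = ereal (real (Suc r)) * s"
    using sneg by (cases s) (auto simp: algebra_simps)  
  finally show ?case .
qed

lemma V_unit: "u \<in> kT \<Longrightarrow> coeff u 0 \<noteq> 0 \<Longrightarrow> \<phi> u = 0"
proof -
  assume u: "u \<in> kT" "coeff u 0 \<noteq> 0"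
  obtain a w where uw: "u = pCons a w" by (cases u)  
  then have a: "a \<in> kQbar" "a \<noteq> 0" and w: "w \<in> kT" using u by (auto simp: kT_pCons)  
  have c: "\<phi> [:a:] = 0" using V_const[OF a(1)] a(2) by simp  
  have "\<phi> ([:0, 1:] * w) = s + \<phi> w" using V_mult[OF kT_X w] sT by simp  
  also have "\<dots> < 0" using V_nonpos[OF w] sneg by (cases s; cases "\<phi> w") auto  
  finally have d: "\<phi> ([:0, 1:] * w) < 0" .
  have "\<phi> u = \<phi> ([:a:] + [:0, 1:] * w)" using uw by (simp only: pCons_decomp[of a w])  
  also have "\<dots> = max (\<phi> [:a:]) (\<phi> ([:0, 1:] * w))"
    by (rule hyper_eq[OF V_add[OF kT_const[OF a(1)] kT_mult[OF kT_X w]]]) (use c d in simp)  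
  also have "\<dots> = 0" using c d by simp  
  finally show ?thesis .
qed

lemma charB: "g \<in> kT \<Longrightarrow> \<phi> g = f_pt s g"
proof (cases "g = 0")
  case True then show ?thesis using V by (simp add: VkT_def f_pt_def)  
next
  case False
  assume g: "g \<in> kT"
  define r where "r = order 0 g"
  have "[:0, 1:] ^ r dvd g" using order_1[of 0 g] by (simp add: r_def)  
  then obtain u where gu: "g = [:0, 1:] ^ r * u" by (elim dvdE)  
  have cu: "coeff g (i + r) = coeff u i" for i
  proof -
    have xr: "[:0, 1:] ^ r = (monom 1 r :: complex poly)" by (simp add: monom_altdef)  
    show ?thesis unfolding gu xr by (simp add: coeff_monom_mult)  
  qed
  have "coeff u i \<in> kQbar" for i
  proof -
    have "coeff g (i + r) \<in> kQbar" using g by (simp add: kT_def)  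
    then show ?thesis by (simp only: cu)  
  qed
  then have uk: "u \<in> kT" by (simp add: kT_def)  
  have u0: "coeff u 0 \<noteq> 0"
  proof
    assume "coeff u 0 = 0"
    then obtain w where "u = pCons 0 w" by (cases u) auto  
    then have "u = [:0, 1:] * w" by (simp only: pCons_decomp[of 0 w]) simp  
    then have "g = [:0, 1:] ^ Suc r * w" using gu by (simp add: mult.assoc)  
    then have "[:0, 1:] ^ Suc r dvd g" by (rule dvdI)  
    then have "Suc r \<le> order 0 g" using order_divides[of 0 "Suc r" g] False by simp  
    then show False by (simp add: r_def)  
  qed
  have "\<phi> g = \<phi> ([:0, 1:] ^ r) + \<phi> u" unfolding gu by (rule V_mult[OF kT_power[OF kT_X] uk])  
  also have "\<dots> = ereal (real r) * s" using V_pow V_unit[OF uk u0] by simp  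
  also have "\<dots> = f_pt s g" using g False by (simp add: f_pt_def ordT_eq r_def)  
  finally show ?thesis .
qed

end




lemma order_X: "order 0 [:0, 1::complex:] = 1"
  using order_power_n_n[of "0::complex" 1] by simp

lemma f_pt_X: "f_pt t [:0, 1:] = t"
  by (simp add: f_pt_def ordT_eq order_X)

lemma Fv_X: "Fv a [:0, 1:] = ereal a"
  by (simp add: Fv_def order_X)

lemma Fv_mX: "Fv a (- [:0, 1:]) = ereal a"
proof -
  have o: "order 0 (- [:0, 1::complex:]) = 1" by (simp only: order_uminus order_X)
  have ne: "- [:0, 1::complex:] \<noteq> 0" by simp
  show ?thesis unfolding Fv_def by (simp only: if_not_P[OF ne] o) simp
qed

lemma Fv_const: "c \<noteq> 0 \<Longrightarrow> Fv a [:c:] = 0"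
  by (simp add: Fv_def order_0I)

lemma HomB_mk:
  assumes tv: "TV w" and cst: "\<And>a. a \<noteq> 0 \<Longrightarrow> w [:[:a:]:] = 0"
  shows "(\<lambda>P. if P \<in> kTT then w P else undefined) \<in> HomB"
  unfolding HomB_def trop_hom_def
proof (intro CollectI conjI ballI allI impI)
  show "(if 0 \<in> kTT then w 0 else undefined) = - \<infinity>" using TV_simps(1)[OF tv] by simp
  show "(if 1 \<in> kTT then w 1 else undefined) = 0" using TV_simps(2)[OF tv] by simp
  fix P Q assume P: "P \<in> kTT" and Q: "Q \<in> kTT"
  show "(if P * Q \<in> kTT then w (P * Q) else undefined) =
        (if P \<in> kTT then w P else undefined) + (if Q \<in> kTT then w Q else undefined)"
    using P Q kTT_mult[OF P Q] TV_simps(4)[OF tv] by simp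
  show "(if P + Q \<in> kTT then w (P + Q) else undefined) \<in>
        trop_hyperadd (if P \<in> kTT then w P else undefined) (if Q \<in> kTT then w Q else undefined)"
    using P Q kTT_add[OF P Q] TV_hyper[OF tv] by simp
next
  fix P assume "P \<in> kTT"
  then show "(if P \<in> kTT then w P else undefined) \<noteq> \<infinity>" using TV_simps(3)[OF tv] by simp
next
  fix a assume a: "a \<in> kQbar"
  have "[:[:a:]:] \<in> kTT" using a by (intro kTT_const kT_const)
  then show "(if [:[:a:]:] \<in> kTT then w [:[:a:]:] else undefined) = (if a = 0 then - \<infinity> else 0)"
    using cst[of a] TV_simps(1)[OF tv] by auto
next
  fix P :: "complex poly poly" assume "P \<notin> kTT"
  then show "(if P \<in> kTT then w P else undefined) = undefined" by simp
qed

lemma HomA_mk: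
  assumes tv: "TV \<phi>" and cst: "\<And>a. a \<noteq> 0 \<Longrightarrow> \<phi> [:a:] = 0"
    and on: "\<And>g. g \<in> kT \<Longrightarrow> f g = \<phi> g" and off: "\<And>g. g \<notin> kT \<Longrightarrow> f g = undefined"
  shows "f \<in> HomA"
  unfolding HomA_def trop_hom_def
proof (intro CollectI conjI ballI allI impI)
  show "f 0 = -\<infinity>" using on[of 0] TV_simps(1)[OF tv] by simp
  show "f 1 = 0" using on[of 1] TV_simps(2)[OF tv] by simp
  fix g h assume g: "g \<in> kT" and h: "h \<in> kT"
  show "f (g * h) = f g + f h" using on g h kT_mult[OF g h] TV_simps(4)[OF tv] by simp
  show "f (g + h) \<in> trop_hyperadd (f g) (f h)" using on g h kT_add[OF g h] TV_hyper[OF tv] by simp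
next
  fix g assume "g \<in> kT" then show "f g \<noteq> \<infinity>" using on TV_simps(3)[OF tv] by simp
next
  fix a assume a: "a \<in> kQbar"
  then show "f [:a:] = (if a = 0 then -\<infinity> else 0)"
    using on[OF kT_const[OF a]] cst[of a] TV_simps(1)[OF tv] by auto
next
  fix g assume "g \<notin> kT" then show "f g = undefined" by (rule off)
qed

lemma RH_char:
  assumes rh: "RH \<psi>" and tv: "TV w" and cst: "\<And>a. a \<noteq> 0 \<Longrightarrow> w [:[:a:]:] = 0"
    and sT: "w (\<psi> [:0, 1:]) = s" and sneg: "s < 0" and g: "g \<in> kT"
  shows "w (\<psi> g) = f_pt s g"
proof -
  have tv2: "TV (\<lambda>p. w (\<psi> p))" using rh by (intro TV_comp[OF tv]) (auto simp: RH_def)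
  have "VkT (\<lambda>p. w (\<psi> p))" using rh cst by (intro TV_VkT[OF tv2]) (auto simp: RH_def)
  from charB[OF this _ sneg g] sT show ?thesis by simp
qed

lemma j1_X: "j1 [:0, 1:] = [:[:0, 1:]:]" by (simp add: j1_def)
lemma j2_X: "j2 [:0, 1:] = [:0, 1:]" by (simp add: j2_pCons j2_const one_pCons)
lemma Delta_X: "Delta [:0, 1:] = [:[:0, 1:]:] + [:0, 1:]"
  by (simp add: Delta_alt j2_X pcompose_pCons Zs_def)

lemma GEN:
  fixes w :: "complex poly poly \<Rightarrow> ereal" and x y :: real
  assumes tv: "TV w" and cst: "\<And>a. a \<noteq> 0 \<Longrightarrow> w [:[:a:]:] = 0"
    and wx: "w [:[:0, 1:]:] = ereal x" and wy: "w [:0, 1:] = ereal y"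
    and wt: "w ([:[:0, 1:]:] + [:0, 1:]) = t"
    and neg: "x < 0" "y < 0" "t < 0"
  shows "f_pt t \<in> berk_odot (f_pt (ereal x)) (f_pt (ereal y))"
proof -
  define \<beta> where "\<beta> = (\<lambda>P. if P \<in> kTT then w P else undefined)"
  have b: "\<beta> \<in> HomB" unfolding \<beta>_def by (rule HomB_mk[OF tv cst])
  have c1: "\<beta> (j1 a) = f_pt (ereal x) a" if "a \<in> kT" for a
  proof -
    have "j1 a \<in> kTT" using RH_j1 that by (auto simp: RH_def)
    then show ?thesis unfolding \<beta>_def using RH_char[OF RH_j1 tv cst _ _ that, of "ereal x"] wx neg
      by (simp add: j1_X)
  qed
  have c2: "\<beta> (j2 a) = f_pt (ereal y) a" if "a \<in> kT" for a
  proof -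
    have "j2 a \<in> kTT" using RH_j2 that by (auto simp: RH_def)
    then show ?thesis unfolding \<beta>_def using RH_char[OF RH_j2 tv cst _ _ that, of "ereal y"] wy neg
      by (simp add: j2_X)
  qed
  have c3: "f_pt t a = \<beta> (Delta a)" if "a \<in> kT" for a
  proof -
    have "Delta a \<in> kTT" using RH_Delta that by (auto simp: RH_def)
    then show ?thesis unfolding \<beta>_def using RH_char[OF RH_Delta tv cst _ _ that, of t] wt neg
      by (simp add: Delta_X)
  qed
  have tvD: "TV (\<lambda>p. w (Delta p))" using RH_Delta by (intro TV_comp[OF tv]) (auto simp: RH_def)
  have hA: "f_pt t \<in> HomA"
  proof (rule HomA_mk[OF tvD])
    fix a :: complex assume "a \<noteq> 0" then show "w (Delta [:a:]) = 0"
      using RH_Delta cst by (simp add: RH_def)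
  next
    fix g assume g: "g \<in> kT"
    have "Delta g \<in> kTT" using RH_Delta g by (auto simp: RH_def)
    then show "f_pt t g = w (Delta g)" using c3[OF g] by (simp add: \<beta>_def)
  next
    fix g assume "g \<notin> kT" then show "f_pt t g = undefined" by (simp add: f_pt_def)
  qed
  show ?thesis unfolding berk_odot_def using hA b c1 c2 c3 by blast
qed




lemma TVG_Fv: "x < 0 \<Longrightarrow> TV (G (Fv x) b)"
  by (rule TV_G) (auto simp: TV_Fv Fv_zero_iff)  

lemma G_Fv_const: "x < 0 \<Longrightarrow> G (Fv x) b [:p:] = Fv x p"
  by (rule G_const) (auto simp: TV_Fv Fv_zero_iff)  

lemma G_Fv_Y: "x < 0 \<Longrightarrow> G (Fv x) b [:0, 1:] = ereal b"
  by (rule G_Y) (auto simp: TV_Fv Fv_zero_iff)  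


lemma case_ne:
  fixes x y :: real
  assumes "x < 0" "y < 0" "x \<noteq> y"
  shows "f_pt (ereal (max x y)) \<in> berk_odot (f_pt (ereal x)) (f_pt (ereal y))"
proof (rule GEN)
  let ?w = "G (Fv x) y"
  show tv: "TV ?w" by (rule TVG_Fv) fact  
  show "?w [:[:a:]:] = 0" if "a \<noteq> 0" for a using that assms by (simp add: G_Fv_const Fv_const)  
  show wx: "?w [:[:0, 1:]:] = ereal x" using assms by (simp add: G_Fv_const Fv_X)  
  show wy: "?w [:0, 1:] = ereal y" using assms by (simp add: G_Fv_Y)  
  show "?w ([:[:0, 1:]:] + [:0, 1:]) = ereal (max x y)"
  proof -
    have "?w [:[:0, 1:]:] \<noteq> ?w [:0, 1:]" using wx wy assms(3) by simp  
    then have "?w ([:[:0, 1:]:] + [:0, 1:]) = max (?w [:[:0, 1:]:]) (?w [:0, 1:])" by (rule TV_simps(6)[OF tv])  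
    then show ?thesis using wx wy by simp  
  qed
qed (use assms in \<open>auto simp: max_def\<close>)

lemma G_YmX:
  fixes x t :: real
  assumes "x < 0" "t \<le> x"
  shows "G (Fv x) t [:- [:0, 1:], 1:] = ereal x"
proof -
  have tv: "TV (Fv x)" by (rule TV_Fv) (use assms in simp)  
  have nd: "\<And>p. Fv x p = -\<infinity> \<Longrightarrow> p = 0" by (simp add: Fv_zero_iff)  
  show ?thesis
  proof (rule antisym)
    show "G (Fv x) t [:- [:0, 1:], 1:] \<le> ereal x"
    proof (rule G_le[OF tv nd])
      fix j
      show "tm (Fv x) t [:- [:0, 1:], 1:] j \<le> ereal x"
      proof (cases j)
        case 0 then show ?thesis using Fv_mX[of x] by (simp add: tm_def)  
      next
        case (Suc k)
        then show ?thesis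
        proof (cases k)
          case 0 then show ?thesis using Suc TV_simps(2)[OF tv] assms by (simp add: tm_def)  
        next
          case (Suc k') then show ?thesis using \<open>j = Suc k\<close> TV_simps(1)[OF tv] by (simp add: tm_def)  
        qed
      qed
    qed
    have "tm (Fv x) t [:- [:0, 1:], 1:] 0 = ereal x" using Fv_mX[of x] by (simp add: tm_def)  
    then show "ereal x \<le> G (Fv x) t [:- [:0, 1:], 1:]" using G_ge[OF tv nd] by metis  
  qed
qed

lemma case_eq:
  fixes x t :: real
  assumes "x < 0" "t \<le> x"
  shows "f_pt (ereal t) \<in> berk_odot (f_pt (ereal x)) (f_pt (ereal x))"
proof (rule GEN)
  let ?q = "[:- [:0, 1:], 1:] :: complex poly poly"
  let ?w = "\<lambda>P. G (Fv x) t (pcompose P ?q)"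
  have tv0: "TV (G (Fv x) t)" by (rule TVG_Fv) fact  
  show tv: "TV ?w" by (rule TV_comp[OF tv0]) (auto simp: pcompose_1 pcompose_mult pcompose_add)  
  show "?w [:[:a:]:] = 0" if "a \<noteq> 0" for a using that assms by (simp add: G_Fv_const Fv_const)  
  show "?w [:[:0, 1:]:] = ereal x" using assms by (simp add: G_Fv_const Fv_X)  
  have "pcompose [:0, 1:] ?q = ?q" by (simp add: pcompose_pCons)  
  then show "?w [:0, 1:] = ereal x" using G_YmX[OF assms] by simp  
  have "pcompose ([:[:0, 1:]:] + [:0, 1:]) ?q = [:0, 1:]" by (simp add: pcompose_pCons)  
  then show "?w ([:[:0, 1:]:] + [:0, 1:]) = ereal t" using assms by (simp add: G_Fv_Y)  
qed (use assms in auto)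

lemma case_inf:
  fixes x :: real
  assumes "x < 0"
  shows "f_pt (-\<infinity>) \<in> berk_odot (f_pt (ereal x)) (f_pt (ereal x))"
proof (rule GEN)
  let ?w = "\<lambda>P. Fv x (poly P (- [:0, 1:]))"
  show tv: "TV ?w" by (rule TV_comp[OF TV_Fv[OF assms]]) auto  
  show "?w [:[:a:]:] = 0" if "a \<noteq> 0" for a using that by (simp add: Fv_const)  
  show "?w [:[:0, 1:]:] = ereal x" by (simp add: Fv_X)  
  show "?w [:0, 1:] = ereal x" using Fv_mX[of x] by simp  
  show "?w ([:[:0, 1:]:] + [:0, 1:]) = -\<infinity>" by (simp add: Fv_def)  
qed (use assms in auto)

lemma ereal_nat_mult_neg: "(s::ereal) < 0 \<Longrightarrow> ereal (real n) * s < 0 \<longleftrightarrow> n > 0"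
  by (cases s) (auto simp: mult_less_0_iff)  

lemma NEG:
  assumes s: "s < 0"
  shows "{g\<in>kT. f_pt s g < 0} = {g. \<exists>q\<in>kT. g = [:0, 1:] * q}"
proof (intro set_eqI iffI)
  fix g assume "g \<in> {g\<in>kT. f_pt s g < 0}"
  then have g: "g \<in> kT" "f_pt s g < 0" by auto  
  have "coeff g 0 = 0"
  proof (cases "g = 0")
    case False
    then have "ereal (real (order 0 g)) * s < 0" using g by (simp add: f_pt_def ordT_eq)  
    then have "order 0 g \<noteq> 0" using ereal_nat_mult_neg[OF s] by simp  
    then have "poly g 0 = 0" using order_root by blast  
    then show ?thesis by (simp add: poly_0_coeff_0)  
  qed simp
  then obtain q where "g = pCons 0 q" by (cases g) auto  
  moreover then have "q \<in> kT" using g by (simp add: kT_pCons)  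
  ultimately show "g \<in> {g. \<exists>q\<in>kT. g = [:0, 1:] * q}" by auto  
next
  fix g assume "g \<in> {g. \<exists>q\<in>kT. g = [:0, 1:] * q}"
  then obtain q where q: "q \<in> kT" "g = [:0, 1:] * q" by auto  
  then have gk: "g \<in> kT" by (simp add: kT_pCons)  
  have "f_pt s g < 0"
  proof (cases "g = 0")
    case True then show ?thesis using gk by (simp add: f_pt_def)  
  next
    case False
    have "poly g 0 = 0" using q by simp  
    then have "order 0 g \<noteq> 0" using order_root False by blast  
    then show ?thesis using gk False ereal_nat_mult_neg[OF s] by (simp add: f_pt_def ordT_eq)  
  qed
  then show "g \<in> {g\<in>kT. f_pt s g < 0}" using gk by simp  
qed

lemma CHAR:
  fixes x y :: real
  assumes "x < 0" "y < 0" "h \<in> berk_odot (f_pt (ereal x)) (f_pt (ereal y))"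
  shows "\<exists>s. h = f_pt s \<and> s \<le> ereal (max x y) \<and> (x \<noteq> y \<longrightarrow> s = ereal (max x y))"
proof -
  obtain \<beta> where hA: "h \<in> HomA" and b: "\<beta> \<in> HomB"
    and e1: "\<forall>a\<in>kT. \<beta> (j1 a) = f_pt (ereal x) a" and e2: "\<forall>a\<in>kT. \<beta> (j2 a) = f_pt (ereal y) a"
    and e3: "\<forall>a\<in>kT. h a = \<beta> (Delta a)"
    using assms(3) unfolding berk_odot_def by blast  
  define s where "s = h [:0, 1:]"
  have bx: "\<beta> [:[:0, 1:]:] = ereal x" using e1 f_pt_X[of "ereal x"] by (metis j1_X kT_X)  
  have by': "\<beta> [:0, 1:] = ereal y" using e2 f_pt_X[of "ereal y"] by (metis j2_X kT_X)  
  have k1: "[:[:0, 1:]:] \<in> kTT" by (intro kTT_const kT_X)  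
  have k2: "[:0, 1:] \<in> (kTT :: complex poly poly set)" by (simp add: kTT_pCons kT_const)  
  have "s = \<beta> ([:[:0, 1:]:] + [:0, 1:])" using e3 Delta_X by (simp add: s_def)  
  also have "\<dots> \<in> trop_hyperadd (\<beta> [:[:0, 1:]:]) (\<beta> [:0, 1:])"
    using b k1 k2 unfolding HomB_def trop_hom_def by blast  
  finally have sh: "s \<in> trop_hyperadd (ereal x) (ereal y)" using bx by' by simp  
  have sle: "s \<le> ereal (max x y)" using hyper_le[OF sh] by simp  
  have seq: "x \<noteq> y \<longrightarrow> s = ereal (max x y)" using hyper_eq[OF sh] by simp  
  have sneg: "s < 0" using sle assms(1,2) by (simp add: order.strict_trans1 max_def)  
  have "h = f_pt s"
  proof
    fix g show "h g = f_pt s g"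
    proof (cases "g \<in> kT")
      case True
      show ?thesis by (rule charB[OF HomA_VkT[OF hA] s_def[symmetric] sneg True])  
    next
      case False
      then show ?thesis using hA by (simp add: HomA_def trop_hom_def f_pt_def)  
    qed
  qed
  then show ?thesis using sle seq by blast  
qed

theorem lemma5p27:
  fixes x y :: real
  assumes "x < 0" and "y < 0"
  shows "(\<forall>h\<in>berk_odot (f_pt (ereal x)) (f_pt (ereal y)).
            {g\<in>kT. h g < 0} = {g. \<exists>q\<in>kT. g = [:0, 1:] * q}) \<and>
         berk_odot (f_pt (ereal x)) (f_pt (ereal y)) =
           (if x \<noteq> y then {f_pt (ereal (max x y))}
            else {f_pt t | t. t \<le> ereal x})"
proof (intro conjI ballI)
  fix h assume "h \<in> berk_odot (f_pt (ereal x)) (f_pt (ereal y))"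
  then obtain s where "h = f_pt s" "s \<le> ereal (max x y)" using CHAR assms by blast  
  moreover have "s < 0" using \<open>s \<le> ereal (max x y)\<close> assms by (simp add: order.strict_trans1 max_def)  
  ultimately show "{g\<in>kT. h g < 0} = {g. \<exists>q\<in>kT. g = [:0, 1:] * q}" using NEG by simp  
next
  show "berk_odot (f_pt (ereal x)) (f_pt (ereal y)) =
           (if x \<noteq> y then {f_pt (ereal (max x y))} else {f_pt t | t. t \<le> ereal x})"
  proof (cases "x = y")
    case False
    have "berk_odot (f_pt (ereal x)) (f_pt (ereal y)) = {f_pt (ereal (max x y))}"
    proof
      show "berk_odot (f_pt (ereal x)) (f_pt (ereal y)) \<subseteq> {f_pt (ereal (max x y))}"
        using CHAR[OF assms] False by blast  
      show "{f_pt (ereal (max x y))} \<subseteq> berk_odot (f_pt (ereal x)) (f_pt (ereal y))"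
        using case_ne[OF assms False] by blast  
    qed
    then show ?thesis using False by simp  
  next
    case True
    have "berk_odot (f_pt (ereal x)) (f_pt (ereal x)) = {f_pt t | t. t \<le> ereal x}"
    proof
      show "berk_odot (f_pt (ereal x)) (f_pt (ereal x)) \<subseteq> {f_pt t | t. t \<le> ereal x}"
        using CHAR[OF assms(1) assms(1)] by fastforce  
      show "{f_pt t | t. t \<le> ereal x} \<subseteq> berk_odot (f_pt (ereal x)) (f_pt (ereal x))"
      proof
        fix f assume "f \<in> {f_pt t | t. t \<le> ereal x}"
        then obtain t where t: "f = f_pt t" "t \<le> ereal x" by auto  
        show "f \<in> berk_odot (f_pt (ereal x)) (f_pt (ereal x))"
        proof (cases t)
          case (real r)
          then show ?thesis using case_eq[OF assms(1), of r] t by simp  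
        next
          case PInf then show ?thesis using t by simp  
        next
          case MInf then show ?thesis using case_inf[OF assms(1)] t by simp  
        qed
      qed
    qed
    then show ?thesis using True by simp  
  qed
qed



end
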